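(* Bob can win the $2$-Expanded Coloring Game on an uncolored $P_4^+$, where $P_4^+$ is the tree with vertices $x_1,x_2,x_3,x_4,x_3'$ and edges $x_1x_2,\ x_2x_3,\ x_3x_4,\ x_3x_3'$.
   Context: A color is legal for an uncolored vertex $v$ if no neighbor of $v$ has that color. The $k$-coloring game on a (partially colored) graph: Alice and Bob alternate turns, Alice first, each coloring an uncolored vertex with a legal color from a set of $k$ colors; Bob wins if at some point an uncolored vertex has no legal color, Alice wins if all vertices become colored. The $k$-Expanded Coloring Game ($k$-ECG) on a partially colored forest is the same as the $k$-coloring game except that on her turn Alice may choose not to color a vertex, and if she does not color a vertex she may instead add to the forest a single new colored leaf (a new vertex joined to exactly one existing vertex, colored with one of the $k$ colors). *)

theory Defs
  imports Main
begin

text \<open>A position of the game: a finite vertex set (vertices are naturals, so fresh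
vertices for new leaves are always available), an undirected edge set (stored as
ordered pairs, adjacency is symmetric), and a partial colouring (None = uncoloured).\<close>

type_synonym pos = "nat set \<times> (nat \<times> nat) set \<times> (nat \<Rightarrow> nat option)"

definition adj :: "(nat \<times> nat) set \<Rightarrow> nat \<Rightarrow> nat \<Rightarrow> bool" where
  "adj E u v \<longleftrightarrow> (u, v) \<in> E \<or> (v, u) \<in> E"

definition legal :: "nat \<Rightarrow> (nat \<times> nat) set \<Rightarrow> (nat \<Rightarrow> nat option) \<Rightarrow> nat \<Rightarrow> nat \<Rightarrow> bool" where
  "legal k E c v a \<longleftrightarrow> a < k \<and> (\<forall>u. adj E v u \<longrightarrow> c u \<noteq> Some a)"

definition blocked :: "nat \<Rightarrow> pos \<Rightarrow> bool" where
  "blocked k p = (case p of (V, E, c) \<Rightarrow> (\<exists>v\<in>V. c v = None \<and> \<not> (\<exists>a. legal k E c v a)))"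

definition all_colored :: "pos \<Rightarrow> bool" where
  "all_colored p = (case p of (V, E, c) \<Rightarrow> (\<forall>v\<in>V. c v \<noteq> None))"

definition color_move :: "nat \<Rightarrow> pos \<Rightarrow> pos \<Rightarrow> bool" where
  "color_move k p p' = (case p of (V, E, c) \<Rightarrow>
     (\<exists>v a. v \<in> V \<and> c v = None \<and> legal k E c v a \<and> p' = (V, E, c(v := Some a))))"

definition alice_move :: "nat \<Rightarrow> pos \<Rightarrow> pos \<Rightarrow> bool" where
  "alice_move k p p' \<longleftrightarrow> color_move k p p' \<or> p' = p \<or>
     (case p of (V, E, c) \<Rightarrow>
        (\<exists>w u a. w \<notin> V \<and> u \<in> V \<and> a < k \<and>
           p' = (insert w V, insert (u, w) E, c(w := Some a))))"

text \<open>bob_wins_A k p: Bob has a winning strategy from p with Alice to move;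
bob_wins_B k p: Bob has a winning strategy from p with Bob to move.
Bob wins as soon as a position is blocked; Alice wins once all vertices are coloured
(and the position is not blocked).\<close>
inductive bob_wins_A :: "nat \<Rightarrow> pos \<Rightarrow> bool" and bob_wins_B :: "nat \<Rightarrow> pos \<Rightarrow> bool"
  for k :: nat where
  A_blocked: "blocked k p \<Longrightarrow> bob_wins_A k p"
| A_step: "\<not> all_colored p \<Longrightarrow> (\<forall>p'. alice_move k p p' \<longrightarrow> bob_wins_B k p') \<Longrightarrow> bob_wins_A k p"
| B_blocked: "blocked k p \<Longrightarrow> bob_wins_B k p"
| B_step: "\<not> all_colored p \<Longrightarrow> color_move k p p' \<Longrightarrow> bob_wins_A k p' \<Longrightarrow> bob_wins_B k p"

text \<open>Uncoloured P_4^+: x1 = 1, x2 = 2, x3 = 3, x4 = 4, x3' = 5.\<close>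
definition P4plus :: pos where
  "P4plus = ({1, 2, 3, 4, 5}, {(1, 2), (2, 3), (3, 4), (3, 5)}, (\<lambda>_. None))"

end

theory Submission
  imports Defs
begin

lemma blockedI:
  assumes "v \<in> V" "c v = None" "adj E v x" "adj E v y" "c x = Some a" "c y = Some (1 - a)" "a < 2"
  shows "blocked 2 (V, E, c)"
proof -
  have "\<not> (\<exists>b. legal 2 E c v b)"
  proof
    assume "\<exists>b. legal 2 E c v b"
    then obtain b where b: "b < 2" "\<forall>u. adj E v u \<longrightarrow> c u \<noteq> Some b"
      unfolding legal_def by blast
    have "b = a \<or> b = 1 - a" using b(1) assms(7) by arith
    then show False using b(2) assms by auto
  qed
  then show ?thesis using assms(1,2) unfolding blocked_def by auto
qed

lemma B_move:
  assumes "v \<in> V" "c v = None" "a < k" "\<forall>u. adj E v u \<longrightarrow> c u \<noteq> Some a"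
    "blocked k (V, E, c(v := Some a))"
  shows "bob_wins_B k (V, E, c)"
proof -
  have "\<not> all_colored (V, E, c)" using assms(1,2) unfolding all_colored_def by auto
  moreover have "color_move k (V, E, c) (V, E, c(v := Some a))"
    using assms(1-4) unfolding color_move_def legal_def by auto
  moreover have "bob_wins_A k (V, E, c(v := Some a))" using assms(5) by (rule A_blocked)
  ultimately show ?thesis by (rule B_step)
qed

lemma alice_cases:
  assumes "alice_move k (V, E, c) p'"
  obtains (col) v a where "v \<in> V" "c v = None" "a < k" "\<forall>u. adj E v u \<longrightarrow> c u \<noteq> Some a"
      "p' = (V, E, c(v := Some a))"
  | (pass) "p' = (V, E, c)"
  | (leaf) w u a where "w \<notin> V" "u \<in> V" "a < k" "p' = (insert w V, insert (u, w) E, c(w := Some a))"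
  using assms unfolding alice_move_def color_move_def legal_def by auto

abbreviation "V0 \<equiv> {1, 2, 3, 4, 5::nat}"
abbreviation "E0 \<equiv> {(1, 2), (2, 3), (3, 4), (3, 5)} :: (nat \<times> nat) set"

lemma two_cases: "(a::nat) < 2 \<Longrightarrow> a = 0 \<or> a = 1" by arith

lemma level2: "bob_wins_A 2 (V0, E0, (\<lambda>_. None)(4 := Some 0))"
proof (rule A_step)
  show "\<not> all_colored (V0, E0, (\<lambda>_. None)(4 := Some 0))" unfolding all_colored_def by auto
  show "\<forall>p'. alice_move 2 (V0, E0, (\<lambda>_. None)(4 := Some 0)) p' \<longrightarrow> bob_wins_B 2 p'"
  proof (intro allI impI)
    fix p' assume "alice_move 2 (V0, E0, (\<lambda>_. None)(4 := Some 0)) p'"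
    then show "bob_wins_B 2 p'"
    proof (cases rule: alice_cases)
      case (col v a)
      have v: "v = 1 \<or> v = 2 \<or> v = 3 \<or> v = 5" using col(1,2) by auto
      have a: "a = 0 \<or> a = 1" using col(3) by arith
      have v: "v = 1 \<or> v = 2 \<or> v = 3 \<or> v = 5" using col(1,2) by auto
      have a: "a = 0 \<or> a = 1" using col(3) by arith
      have "a = 1" if "v = 3" using col(3,4) that by (auto simp: adj_def)
      have c10: "bob_wins_B 2 (V0, E0, ((\<lambda>_. None)(4 := Some 0))(1 := Some 0))"
        apply (rule B_move[where v=5 and a=1])
          apply (auto simp add: adj_def)[4]
         apply (rule blockedI[where v=3 and x=4 and y=5 and a=0])
         apply (auto simp add: adj_def)
          done
      have c11: "bob_wins_B 2 (V0, E0, ((\<lambda>_. None)(4 := Some 0))(1 := Some 1))"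
        apply (rule B_move[where v=5 and a=1])
          apply (auto simp add: adj_def)[4]
         apply (rule blockedI[where v=3 and x=4 and y=5 and a=0])
         apply (auto simp add: adj_def)
          done
      have c20: "bob_wins_B 2 (V0, E0, ((\<lambda>_. None)(4 := Some 0))(2 := Some 0))"
        apply (rule B_move[where v=5 and a=1])
          apply (auto simp add: adj_def)[4]
         apply (rule blockedI[where v=3 and x=4 and y=5 and a=0])
         apply (auto simp add: adj_def)
          done
      have c21: "bob_wins_B 2 (V0, E0, ((\<lambda>_. None)(4 := Some 0))(2 := Some 1))"
        by (rule B_blocked; rule blockedI[where v=3 and x=4 and y=2 and a=0]; simp add: adj_def)
      have c51: "bob_wins_B 2 (V0, E0, ((\<lambda>_. None)(4 := Some 0))(5 := Some 1))"
        by (rule B_blocked; rule blockedI[where v=3 and x=4 and y=5 and a=0]; simp add: adj_def)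
      have c50: "bob_wins_B 2 (V0, E0, ((\<lambda>_. None)(4 := Some 0))(5 := Some 0))"
        apply (rule B_move[where v=2 and a=1])
          apply (auto simp add: adj_def)[4]
         apply (rule blockedI[where v=3 and x=4 and y=2 and a=0])
         apply (auto simp add: adj_def)
          done
      have c31: "bob_wins_B 2 (V0, E0, ((\<lambda>_. None)(4 := Some 0))(3 := Some 1))"
        apply (rule B_move[where v=1 and a=0])
          apply (auto simp add: adj_def)[4]
         apply (rule blockedI[where v=2 and x=1 and y=3 and a=0])
         apply (auto simp add: adj_def)
          done
      show ?thesis unfolding col(5) using v a c10 c11 c20 c21 c51 c50 c31 \<open>v = 3 \<Longrightarrow> a = 1\<close> by auto
    next
      case pass
      show ?thesis unfolding pass
        apply (rule B_move[where v=5 and a=1])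
          apply (auto simp add: adj_def)[4]
         apply (rule blockedI[where v=3 and x=4 and y=5 and a=0])
         apply (auto simp add: adj_def)
          done
    next
      case (leaf w u b)
      show ?thesis
      proof (cases "u = 5")
        case True
        show ?thesis unfolding leaf(4) True
          apply (rule B_move[where v=2 and a=1])
              apply (insert leaf(1), auto simp add: adj_def)[4]
          apply (rule blockedI[where v=3 and x=4 and y=2 and a=0])
                apply (insert leaf(1), auto simp add: adj_def)
          done
      next
        case False
        show ?thesis unfolding leaf(4)
          apply (rule B_move[where v=5 and a=1])
              apply (insert leaf(1) False, auto simp add: adj_def)[4]
          apply (rule blockedI[where v=3 and x=4 and y=5 and a=0])
                apply (insert leaf(1) False, auto simp add: adj_def)
          done
      qed
    qed
  qed
qed

theorem lemma4p2:
  shows "bob_wins_A 2 P4plus"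
  unfolding P4plus_def
proof (rule A_step)
  show "\<not> all_colored (V0, E0, (\<lambda>_. None))" unfolding all_colored_def by auto
  show "\<forall>p'. alice_move 2 (V0, E0, (\<lambda>_. None)) p' \<longrightarrow> bob_wins_B 2 p'"
  proof (intro allI impI)
    fix p' assume "alice_move 2 (V0, E0, (\<lambda>_. None)) p'"
    then show "bob_wins_B 2 p'"
    proof (cases rule: alice_cases)
      case (col v a)
      have v: "v = 1 \<or> v = 2 \<or> v = 3 \<or> v = 4 \<or> v = 5" using col(1) by auto
      have a: "a < 2" using col(3) .
      have c1: "bob_wins_B 2 (V0, E0, ((\<lambda>_. None))(1 := Some a))"
        apply (rule B_move[where v=3 and a="1-a"])
          apply (insert a, auto simp add: adj_def)[4]
       apply (rule blockedI[where v=2 and x=1 and y=3])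
       apply (insert a, auto simp add: adj_def)
       done
      have c2: "bob_wins_B 2 (V0, E0, ((\<lambda>_. None))(2 := Some a))"
        apply (rule B_move[where v=4 and a="1-a"])
          apply (insert a, auto simp add: adj_def)[4]
       apply (rule blockedI[where v=3 and x=2 and y=4])
       apply (insert a, auto simp add: adj_def)
       done
      have c3: "bob_wins_B 2 (V0, E0, ((\<lambda>_. None))(3 := Some a))"
        apply (rule B_move[where v=1 and a="1-a"])
          apply (insert a, auto simp add: adj_def)[4]
       apply (rule blockedI[where v=2 and x=3 and y=1])
       apply (insert a, auto simp add: adj_def)
       done
      have c4: "bob_wins_B 2 (V0, E0, ((\<lambda>_. None))(4 := Some a))"
        apply (rule B_move[where v=5 and a="1-a"])
          apply (insert a, auto simp add: adj_def)[4]
       apply (rule blockedI[where v=3 and x=4 and y=5])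
       apply (insert a, auto simp add: adj_def)
       done
      have c5: "bob_wins_B 2 (V0, E0, ((\<lambda>_. None))(5 := Some a))"
        apply (rule B_move[where v=4 and a="1-a"])
          apply (insert a, auto simp add: adj_def)[4]
       apply (rule blockedI[where v=3 and x=5 and y=4])
       apply (insert a, auto simp add: adj_def)
       done
      show ?thesis unfolding col(5) using v c1 c2 c3 c4 c5 by auto
    next
      case pass
      have "color_move 2 (V0, E0, (\<lambda>_. None)) (V0, E0, ((\<lambda>_. None))(4 := Some 0))"
        unfolding color_move_def legal_def apply simp apply (rule exI[where x=4]) apply auto apply (rule exI[where x=0]) apply auto done
      moreover have "\<not> all_colored (V0, E0, (\<lambda>_. None))" unfolding all_colored_def by auto
      ultimately show ?thesis unfolding pass using level2 by (intro B_step) 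
    next
      case (leaf w u b)
      have u: "u = 1 \<or> u = 2 \<or> u = 3 \<or> u = 4 \<or> u = 5" using leaf(2) by auto
      have c1: "bob_wins_B 2 (insert w V0, insert (1, w) E0, ((\<lambda>_. None))(w := Some b))"
        apply (rule B_move[where v=2 and a="1-b"])
          apply (insert leaf(1) leaf(3), auto simp add: adj_def)[4]
       apply (rule blockedI[where v=1 and x=w and y=2])
       apply (insert leaf(1) leaf(3), auto simp add: adj_def)
       done
      have c2: "bob_wins_B 2 (insert w V0, insert (2, w) E0, ((\<lambda>_. None))(w := Some b))"
        apply (rule B_move[where v=1 and a="1-b"])
          apply (insert leaf(1) leaf(3), auto simp add: adj_def)[4]
       apply (rule blockedI[where v=2 and x=w and y=1])
       apply (insert leaf(1) leaf(3), auto simp add: adj_def)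
       done
      have c3: "bob_wins_B 2 (insert w V0, insert (3, w) E0, ((\<lambda>_. None))(w := Some b))"
        apply (rule B_move[where v=4 and a="1-b"])
          apply (insert leaf(1) leaf(3), auto simp add: adj_def)[4]
       apply (rule blockedI[where v=3 and x=w and y=4])
       apply (insert leaf(1) leaf(3), auto simp add: adj_def)
       done
      have c4: "bob_wins_B 2 (insert w V0, insert (4, w) E0, ((\<lambda>_. None))(w := Some b))"
        apply (rule B_move[where v=3 and a="1-b"])
          apply (insert leaf(1) leaf(3), auto simp add: adj_def)[4]
       apply (rule blockedI[where v=4 and x=w and y=3])
       apply (insert leaf(1) leaf(3), auto simp add: adj_def)
       done
      have c5: "bob_wins_B 2 (insert w V0, insert (5, w) E0, ((\<lambda>_. None))(w := Some b))"
        apply (rule B_move[where v=3 and a="1-b"])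
          apply (insert leaf(1) leaf(3), auto simp add: adj_def)[4]
       apply (rule blockedI[where v=5 and x=w and y=3])
       apply (insert leaf(1) leaf(3), auto simp add: adj_def)
       done
      show ?thesis unfolding leaf(4) using u c1 c2 c3 c4 c5 by auto
    qed
  qed
qed

end
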